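(* In the calculus described in the context, for every well-typed expression $e:A\leadsto B$ (in which every user-defined operation carries a consistent incrementalization, and every occurrence of $+$ is at a type $A$ with $[\![A]\!]=[\![A]\!]'$ and with $\oplus$ associative and commutative on $[\![A]\!]$), the triple $(C_e,i_e,d_e)$ produced by the incrementalization transformation is a consistent incrementalization of the denotation $[\![e]\!]:[\![A]\!]\to[\![B]\!]$, i.e. for all $x\in[\![A]\!]$, $x'\in[\![A]\!]'$: $(i_e\,x)_1=[\![e]\!]\,x$; $[\![e]\!](x\oplus x')=[\![e]\!]\,x\oplus(d_e\,x'\,(i_e\,x)_2)_1$; and $(i_e(x\oplus x'))_2=(d_e\,x'\,(i_e\,x)_2)_2$.
   Context: Fix a container: a type $S$ of shapes and for each $s:S$ an index type $\mathrm{Pos}(s)$ with decidable equality. Fix a base change structure $(\beta,\beta',\oplus,\ominus)$ with $x\oplus(y\ominus x)=y$. Object types: $A,B::=\mathsf{b}\mid F_sA\mid A\times B\mid A+B$. Value types/change types and $\oplus,\ominus$: $[\![\mathsf b]\!]=\beta$, $[\![\mathsf b]\!]'=\beta'$; $[\![F_sA]\!]=\mathrm{Pos}(s)\to[\![A]\!]$, $[\![F_sA]\!]'=\mathrm{Pos}(s)\to[\![A]\!]'$ (pointwise $\oplus,\ominus$); products componentwise; $[\![A+B]\!]=[\![A]\!]+[\![B]\!]$ (injections $\iota_1,\iota_2$) and $[\![A+B]\!]'$ has constructors $\mathsf{cl}\,a',\mathsf{cr}\,b',\mathsf{sl}\,a,\mathsf{sr}\,b,\mathsf{null}$ ($a'\in[\![A]\!]',b'\in[\![B]\!]',a\in[\![A]\!],b\in[\![B]\!]$)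 with $\iota_1x\oplus\mathsf{cl}x'=\iota_1(x\oplus x')$, $\iota_1x\oplus\mathsf{cr}y'=\iota_1x$, $\iota_2y\oplus\mathsf{cl}x'=\iota_2y$, $\iota_2y\oplus\mathsf{cr}y'=\iota_2(y\oplus y')$, $z\oplus\mathsf{sl}x=\iota_1x$, $z\oplus\mathsf{sr}y=\iota_2y$, $z\oplus\mathsf{null}=z$; $\iota_1x\ominus\iota_1y=\mathsf{cl}(x\ominus y)$, $\iota_1x\ominus\iota_2y=\mathsf{sl}x$, $\iota_2x\ominus\iota_1y=\mathsf{sr}x$, $\iota_2x\ominus\iota_2y=\mathsf{cr}(x\ominus y)$. An incrementalization of $f:[\![A]\!]\to[\![B]\!]$ is a triple $(C,i,d)$, $C$ a type, $i:[\![A]\!]\to[\![B]\!]\times C$, $d:[\![A]\!]'\to C\to[\![B]\!]'\times C$. A user-defined operation $o:\mathsf{Op}\,A\,B$ is a function $f_o:[\![A]\!]\to[\![B]\!]$ together with a consistent incrementalization of $f_o$ (consistency meaning the three laws in the claim). Expressions, typing and denotation ($s,s_1,s_2:S$; $i:\mathrm{Pos}(s)$; $r:\mathrm{Pos}(s_2)\to\mathrm{Pos}(s_1)$; $p:\mathrm{Pos}(s)\to\mathbb B$; $c\in[\![A]\!]$): $e_1;e_2:A\leadsto C$ for $e_1:A\leadsto B,e_2:B\leadsto C$, $[\![e_1;e_2]\!]x=[\![e_2]\!]([\![e_1]\!]x)$; $e_1\times e_2:A\times C\leadsto B\times D$, $(x,y)\mapsto([\![e_1]\!]x,[\![e_2]\!]y)$;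 $\mathsf{id}:A\leadsto A$; $\mathsf{dup}:A\leadsto A\times A$, $x\mapsto(x,x)$; $\mathsf{fst},\mathsf{snd}$ projections; $\mathsf{cst}\,c:B\leadsto A$, $x\mapsto c$; $+:A\times A\leadsto A$, $(x,y)\mapsto x\oplus y$ (only when $[\![A]\!]=[\![A]\!]'$); $\mathsf{op}\,o:A\leadsto B$, $[\![\mathsf{op}\,o]\!]=f_o$; $\mathsf{map}\,e:F_sA\leadsto F_sB$, $x\mapsto\lambda i.[\![e]\!](x\,i)$; $\mathsf{zip}:F_sA\times F_sB\leadsto F_s(A\times B)$, $(x,y)\mapsto\lambda i.(x\,i,y\,i)$; $\mathsf{get}\,i:F_sA\leadsto A$, $x\mapsto x\,i$; $\mathsf{set}\,i:A\times F_sA\leadsto F_sA$, $(x,a)\mapsto\lambda j.\,\mathsf{if}\ i=j\ \mathsf{then}\ x\ \mathsf{else}\ a\,j$; $\mathsf{reshape}\,r:F_{s_1}A\leadsto F_{s_2}A$, $x\mapsto\lambda i.x(r\,i)$; $\mathsf{replicate}\,s:A\leadsto F_sA$, $x\mapsto\lambda i.x$; $\mathsf{tp}:F_{s_1}(F_{s_2}A)\leadsto F_{s_2}(F_{s_1}A)$, $x\mapsto\lambda i\lambda j.\,x\,j\,i$; $\mathsf{filter}\,p:A\times F_sA\leadsto F_sA$, $(x,a)\mapsto\lambda i.\,\mathsf{if}\ p\,i\ \mathsf{then}\ a\,i\ \mathsf{else}\ x$; $\mathsf{inl}:A\leadsto A+B$, $\mathsf{inr}:B\leadsto A+B$; $\mathsf{fuse}:A+A\leadsto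 A$, $\iota_kx\mapsto x$; $\mathsf{distr}:A\times(B+C)\leadsto A\times B+A\times C$, $(x,\iota_ky)\mapsto\iota_k(x,y)$; $e_1\|e_2:A+C\leadsto B+D$, $\iota_1x\mapsto\iota_1([\![e_1]\!]x)$, $\iota_2x\mapsto\iota_2([\![e_2]\!]x)$ (the paper prints these last two without the injections). Incrementalization transformation $e\mapsto(C_e,i_e,d_e)$: • For $e\in\{\mathsf{id},\mathsf{dup},\mathsf{fst},\mathsf{snd},\mathsf{zip},\mathsf{tp},\mathsf{get}\,i,\mathsf{set}\,i,\mathsf{reshape}\,r,\mathsf{replicate}\,s,\mathsf{filter}\,p\}$: $C_e=\mathsf{Unit}$, $i_e\,x=([\![e]\!]x,\star)$, $d_e\,x'\,\star=(e\text{'s defining equation evaluated on the change }x',\star)$ (e.g. $d_{\mathsf{dup}}x'\star=((x',x'),\star)$). For $\mathsf{inl}$/$\mathsf{inr}$: $C=\mathsf{Unit}$, $i\,x=(\iota_kx,\star)$, $d_{\mathsf{inl}}x'\star=(\mathsf{cl}\,x',\star)$, $d_{\mathsf{inr}}y'\star=(\mathsf{cr}\,y',\star)$. • $\mathsf{cst}\,c$: $C=\mathsf{Unit}$, $i\,x=(c,\star)$, $d\,x'\,\star=(c\ominus c,\star)$. • $+$: $C=\mathsf{Unit}$, $i(x,y)=(x\oplus y,\star)$, $d(x',y')\star=(x'\oplus y',\star)$. • $\mathsf{op}\,o$: the given incrementalization of $o$. • $f;g$: $C=C_f\times C_g$, $i\,x=(z,(c_1,c_2))$ where $(y,c_1)=i_f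 x$, $(z,c_2)=i_g y$; $d\,x'(c_1,c_2)=(z',(c_1',c_2'))$ where $(y',c_1')=d_fx'c_1$, $(z',c_2')=d_gy'c_2$. • $f\times g$: $C=C_f\times C_g$, $i(x_1,x_2)=((y_1,y_2),(c_1,c_2))$ with $(y_1,c_1)=i_fx_1$, $(y_2,c_2)=i_gx_2$; $d(x_1',x_2')(c_1,c_2)=((y_1',y_2'),(c_1',c_2'))$ with $(y_k',c_k')$ from $d_f x_1'c_1$, $d_g x_2'c_2$. • $\mathsf{map}_s f$: $C=\mathrm{Pos}(s)\to C_f$, $i\,x=(\lambda j.(i_f(x\,j))_1,\lambda j.(i_f(x\,j))_2)$, $d\,x'\,c=(\lambda j.(d_f(x'j)(c\,j))_1,\lambda j.(d_f(x'j)(c\,j))_2)$. • $\mathsf{fuse}$: $C=[\![A]\!]+[\![A]\!]$, $i(\iota_kx)=(x,\iota_kx)$; $d(\mathsf{cl}x')(\iota_1x)=(x',\iota_1(x\oplus x'))$, $d(\mathsf{cr}y')(\iota_1x)=(x\ominus x,\iota_1x)$, $d(\mathsf{cl}x')(\iota_2y)=(y\ominus y,\iota_2y)$, $d(\mathsf{cr}y')(\iota_2y)=(y',\iota_2(y\oplus y'))$, $d(\mathsf{sl}x)(\iota_kx_0)=(x\ominus x_0,\iota_1x)$, $d(\mathsf{sr}y)(\iota_ky_0)=(y\ominus y_0,\iota_2y)$, $d\,\mathsf{null}(\iota_kx)=(x\ominus x,\iota_kx)$. • $\mathsf{distr}$: $C=[\![A]\!]\times([\![B]\!]+[\![C]\!])$,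 $i(x,\iota_ky)=(\iota_k(x,y),(x,\iota_ky))$; $d(x',\mathsf{cl}y')(x,\iota_1y)=(\mathsf{cl}(x',y'),(x\oplus x',\iota_1(y\oplus y')))$; $d(x',\mathsf{cr}y')(x,\iota_1y)=(\mathsf{cl}(x',y\ominus y),(x\oplus x',\iota_1y))$; $d(x',\mathsf{cl}y')(x,\iota_2y)=(\mathsf{cr}(x',y\ominus y),(x\oplus x',\iota_2y))$; $d(x',\mathsf{cr}y')(x,\iota_2y)=(\mathsf{cr}(x',y'),(x\oplus x',\iota_2(y\oplus y')))$; $d(x',\mathsf{sl}y)(x,\_)=(\mathsf{sl}(x\oplus x',y),(x\oplus x',\iota_1y))$; $d(x',\mathsf{sr}y)(x,\_)=(\mathsf{sr}(x\oplus x',y),(x\oplus x',\iota_2y))$; $d(x',\mathsf{null})(x,\iota_1y)=(\mathsf{cl}(x',y\ominus y),(x\oplus x',\iota_1y))$; $d(x',\mathsf{null})(x,\iota_2y)=(\mathsf{cr}(x',y\ominus y),(x\oplus x',\iota_2y))$. • $f\|g$ ($f:A_1\leadsto B_1$, $g:A_2\leadsto B_2$): $C=C_f\times[\![B_1]\!]+C_g\times[\![B_2]\!]$; $i(\iota_1x)=(\iota_1y,\iota_1(c,y))$ with $(y,c)=i_fx$, similarly for $\iota_2$ with $g$; $d(\mathsf{cl}x')(\iota_1(c,y))=(\mathsf{cl}y',\iota_1(c',y\oplus y'))$ with $(y',c')=d_fx'c$; $d(\mathsf{cr}x')(\iota_1(c,y))=(\mathsf{null},\iota_1(c,y))$; $d(\mathsf{cl}x')(\iota_2(c,y))=(\mathsf{null},\iota_2(c,y))$;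 $d(\mathsf{cr}x')(\iota_2(c,y))=(\mathsf{cr}y',\iota_2(c',y\oplus y'))$ with $(y',c')=d_gx'c$; $d(\mathsf{sl}x)(\iota_1(c_0,y_0))=(\mathsf{cl}(y\ominus y_0),\iota_1(c,y))$ and $d(\mathsf{sl}x)(\iota_2\_)=(\mathsf{sl}y,\iota_1(c,y))$ with $(y,c)=i_fx$; $d(\mathsf{sr}x)(\iota_1\_)=(\mathsf{sr}y,\iota_2(c,y))$ and $d(\mathsf{sr}x)(\iota_2(c_0,y_0))=(\mathsf{cr}(y\ominus y_0),\iota_2(c,y))$ with $(y,c)=i_gx$; $d\,\mathsf{null}\,z=(\mathsf{null},z)$. *)

theory Defs
  imports Main
begin

text \<open>Values, changes and caches all live in one universal datatype; the
  semantic types [[A]] and [[A]]' are carved out as sets.  Elements of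
  F_s A are functions Pos(s) -> [[A]], represented extensionally as
  functions on the ambient position type 'p that are VUnit outside Pos s.\<close>

record ('b, 's, 'p) setting =
  beta   :: "'b set"
  dbeta  :: "'b set"
  bplus  :: "'b \<Rightarrow> 'b \<Rightarrow> 'b"
  bminus :: "'b \<Rightarrow> 'b \<Rightarrow> 'b"
  pos    :: "'s \<Rightarrow> 'p set"

datatype 's ty = TB | TF 's "'s ty" | TProd "'s ty" "'s ty" | TSum "'s ty" "'s ty"

datatype ('b, 'p) v =
    VB 'b
  | VF "'p \<Rightarrow> ('b, 'p) v"
  | VP "('b, 'p) v" "('b, 'p) v"
  | VInl "('b, 'p) v" | VInr "('b, 'p) v"
  | VCl "('b, 'p) v" | VCr "('b, 'p) v" | VSl "('b, 'p) v" | VSr "('b, 'p) v" | VNull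
  | VUnit

fun vfst :: "('b, 'p) v \<Rightarrow> ('b, 'p) v" where
  "vfst (VP x y) = x" | "vfst _ = undefined"
fun vsnd :: "('b, 'p) v \<Rightarrow> ('b, 'p) v" where
  "vsnd (VP x y) = y" | "vsnd _ = undefined"
fun app :: "('b, 'p) v \<Rightarrow> 'p \<Rightarrow> ('b, 'p) v" where
  "app (VF g) i = g i" | "app _ i = undefined"

definition restr :: "('b, 's, 'p) setting \<Rightarrow> 's \<Rightarrow> ('p \<Rightarrow> ('b, 'p) v) \<Rightarrow> ('b, 'p) v" where
  "restr S s g = VF (\<lambda>i. if i \<in> pos S s then g i else VUnit)"

fun vals :: "('b, 's, 'p) setting \<Rightarrow> 's ty \<Rightarrow> ('b, 'p) v set" where
  "vals S TB = VB ` beta S"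
| "vals S (TF s A) = {VF g | g. (\<forall>i\<in>pos S s. g i \<in> vals S A) \<and> (\<forall>i. i \<notin> pos S s \<longrightarrow> g i = VUnit)}"
| "vals S (TProd A B) = {VP x y | x y. x \<in> vals S A \<and> y \<in> vals S B}"
| "vals S (TSum A B) = VInl ` vals S A \<union> VInr ` vals S B"

fun dvals :: "('b, 's, 'p) setting \<Rightarrow> 's ty \<Rightarrow> ('b, 'p) v set" where
  "dvals S TB = VB ` dbeta S"
| "dvals S (TF s A) = {VF g | g. (\<forall>i\<in>pos S s. g i \<in> dvals S A) \<and> (\<forall>i. i \<notin> pos S s \<longrightarrow> g i = VUnit)}"
| "dvals S (TProd A B) = {VP x y | x y. x \<in> dvals S A \<and> y \<in> dvals S B}"
| "dvals S (TSum A B) = VCl ` dvals S A \<union> VCr ` dvals S B \<union> VSl ` vals S A \<union> VSr ` vals S B \<union> {VNull}"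

text \<open>oplus and ominus, defined uniformly by structure (pointwise on F, componentwise on products,
  the given rules on sums; VUnit only occurs outside Pos s and as the unit cache).\<close>
primrec vplus :: "('b, 's, 'p) setting \<Rightarrow> ('b, 'p) v \<Rightarrow> ('b, 'p) v \<Rightarrow> ('b, 'p) v" where
  "vplus S (VB a) y = (case y of VB b \<Rightarrow> VB (bplus S a b) | _ \<Rightarrow> undefined)"
| "vplus S (VF f) y = (case y of VF g \<Rightarrow> VF (\<lambda>i. vplus S (f i) (g i)) | _ \<Rightarrow> undefined)"
| "vplus S (VP a b) y = (case y of VP c d \<Rightarrow> VP (vplus S a c) (vplus S b d) | _ \<Rightarrow> undefined)"
| "vplus S (VInl x) y = (case y of VCl x' \<Rightarrow> VInl (vplus S x x') | VCr _ \<Rightarrow> VInl x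
      | VSl z \<Rightarrow> VInl z | VSr z \<Rightarrow> VInr z | VNull \<Rightarrow> VInl x | _ \<Rightarrow> undefined)"
| "vplus S (VInr x) y = (case y of VCl _ \<Rightarrow> VInr x | VCr x' \<Rightarrow> VInr (vplus S x x')
      | VSl z \<Rightarrow> VInl z | VSr z \<Rightarrow> VInr z | VNull \<Rightarrow> VInr x | _ \<Rightarrow> undefined)"
| "vplus S (VCl x) y = undefined"
| "vplus S (VCr x) y = undefined"
| "vplus S (VSl x) y = undefined"
| "vplus S (VSr x) y = undefined"
| "vplus S VNull y = undefined"
| "vplus S VUnit y = VUnit"

primrec vminus :: "('b, 's, 'p) setting \<Rightarrow> ('b, 'p) v \<Rightarrow> ('b, 'p) v \<Rightarrow> ('b, 'p) v" where
  "vminus S (VB a) y = (case y of VB b \<Rightarrow> VB (bminus S a b) | _ \<Rightarrow> undefined)"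
| "vminus S (VF f) y = (case y of VF g \<Rightarrow> VF (\<lambda>i. vminus S (f i) (g i)) | _ \<Rightarrow> undefined)"
| "vminus S (VP a b) y = (case y of VP c d \<Rightarrow> VP (vminus S a c) (vminus S b d) | _ \<Rightarrow> undefined)"
| "vminus S (VInl x) y = (case y of VInl z \<Rightarrow> VCl (vminus S x z) | VInr z \<Rightarrow> VSl x | _ \<Rightarrow> undefined)"
| "vminus S (VInr x) y = (case y of VInl z \<Rightarrow> VSr x | VInr z \<Rightarrow> VCr (vminus S x z) | _ \<Rightarrow> undefined)"
| "vminus S (VCl x) y = undefined"
| "vminus S (VCr x) y = undefined"
| "vminus S (VSl x) y = undefined"
| "vminus S (VSr x) y = undefined"
| "vminus S VNull y = undefined"
| "vminus S VUnit y = VUnit"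

text \<open>Shape annotations needed to build extensional F_s values are recorded
  explicitly: Map s, Zip s, Reshape s2 r, Replicate s, Tp s1 s2, Filter s p.
  A user-defined operation Op f C i d carries its function f and its incrementalization
  (C, i, d).\<close>
datatype ('b, 's, 'p) exp =
    Seq "('b, 's, 'p) exp" "('b, 's, 'p) exp"
  | Par "('b, 's, 'p) exp" "('b, 's, 'p) exp"
  | Id | Dup | Fst | Snd
  | Cst "('b, 'p) v"
  | Plus
  | Op "('b, 'p) v \<Rightarrow> ('b, 'p) v" "('b, 'p) v set"
       "('b, 'p) v \<Rightarrow> ('b, 'p) v \<times> ('b, 'p) v"
       "('b, 'p) v \<Rightarrow> ('b, 'p) v \<Rightarrow> ('b, 'p) v \<times> ('b, 'p) v"
  | Map 's "('b, 's, 'p) exp"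
  | Zip 's
  | Get 'p
  | SetE 'p
  | Reshape 's "'p \<Rightarrow> 'p"
  | Replicate 's
  | Tp 's 's
  | Filter 's "'p \<Rightarrow> bool"
  | Inl | Inr | Fuse | Distr
  | Alt "('b, 's, 'p) exp" "('b, 's, 'p) exp"

primrec den :: "('b, 's, 'p) setting \<Rightarrow> ('b, 's, 'p) exp \<Rightarrow> ('b, 'p) v \<Rightarrow> ('b, 'p) v" where
  "den S (Seq e1 e2) x = den S e2 (den S e1 x)"
| "den S (Par e1 e2) x = VP (den S e1 (vfst x)) (den S e2 (vsnd x))"
| "den S Id x = x"
| "den S Dup x = VP x x"
| "den S Fst x = vfst x"
| "den S Snd x = vsnd x"
| "den S (Cst c) x = c"
| "den S Plus x = vplus S (vfst x) (vsnd x)"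
| "den S (Op f C i d) x = f x"
| "den S (Map s e) x = restr S s (\<lambda>j. den S e (app x j))"
| "den S (Zip s) x = restr S s (\<lambda>j. VP (app (vfst x) j) (app (vsnd x) j))"
| "den S (Get i) x = app x i"
| "den S (SetE i) x = VF (\<lambda>j. if i = j then vfst x else app (vsnd x) j)"
| "den S (Reshape s r) x = restr S s (\<lambda>j. app x (r j))"
| "den S (Replicate s) x = restr S s (\<lambda>j. x)"
| "den S (Tp s1 s2) x = restr S s2 (\<lambda>i. restr S s1 (\<lambda>j. app (app x j) i))"
| "den S (Filter s p) x = restr S s (\<lambda>j. if p j then app (vsnd x) j else vfst x)"
| "den S Inl x = VInl x"
| "den S Inr x = VInr x"
| "den S Fuse x = (case x of VInl y \<Rightarrow> y | VInr y \<Rightarrow> y | _ \<Rightarrow> undefined)"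
| "den S Distr x = (case vsnd x of VInl y \<Rightarrow> VInl (VP (vfst x) y)
                                 | VInr y \<Rightarrow> VInr (VP (vfst x) y) | _ \<Rightarrow> undefined)"
| "den S (Alt e1 e2) x = (case x of VInl y \<Rightarrow> VInl (den S e1 y)
                                   | VInr y \<Rightarrow> VInr (den S e2 y) | _ \<Rightarrow> undefined)"

primrec ini :: "('b, 's, 'p) setting \<Rightarrow> ('b, 's, 'p) exp \<Rightarrow> ('b, 'p) v \<Rightarrow> ('b, 'p) v \<times> ('b, 'p) v" where
  "ini S (Seq f g) x = (let (y, c1) = ini S f x; (z, c2) = ini S g y in (z, VP c1 c2))"
| "ini S (Par f g) x = (let (y1, c1) = ini S f (vfst x); (y2, c2) = ini S g (vsnd x)
                        in (VP y1 y2, VP c1 c2))"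
| "ini S Id x = (den S Id x, VUnit)"
| "ini S Dup x = (den S Dup x, VUnit)"
| "ini S Fst x = (den S Fst x, VUnit)"
| "ini S Snd x = (den S Snd x, VUnit)"
| "ini S (Cst c) x = (c, VUnit)"
| "ini S Plus x = (vplus S (vfst x) (vsnd x), VUnit)"
| "ini S (Op f C i d) x = i x"
| "ini S (Map s f) x = (restr S s (\<lambda>j. fst (ini S f (app x j))), restr S s (\<lambda>j. snd (ini S f (app x j))))"
| "ini S (Zip s) x = (den S (Zip s) x, VUnit)"
| "ini S (Get i) x = (den S (Get i) x, VUnit)"
| "ini S (SetE i) x = (den S (SetE i) x, VUnit)"
| "ini S (Reshape s r) x = (den S (Reshape s r) x, VUnit)"
| "ini S (Replicate s) x = (den S (Replicate s) x, VUnit)"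
| "ini S (Tp s1 s2) x = (den S (Tp s1 s2) x, VUnit)"
| "ini S (Filter s p) x = (den S (Filter s p) x, VUnit)"
| "ini S Inl x = (VInl x, VUnit)"
| "ini S Inr x = (VInr x, VUnit)"
| "ini S Fuse x = ((case x of VInl y \<Rightarrow> y | VInr y \<Rightarrow> y | _ \<Rightarrow> undefined), x)"
| "ini S Distr x = (den S Distr x, x)"
| "ini S (Alt f g) x = (case x of
      VInl a \<Rightarrow> (let (y, c) = ini S f a in (VInl y, VInl (VP c y)))
    | VInr a \<Rightarrow> (let (y, c) = ini S g a in (VInr y, VInr (VP c y)))
    | _ \<Rightarrow> undefined)"

primrec dif :: "('b, 's, 'p) setting \<Rightarrow> ('b, 's, 'p) exp \<Rightarrow> ('b, 'p) v \<Rightarrow> ('b, 'p) v \<Rightarrow> ('b, 'p) v \<times> ('b, 'p) v" where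
  "dif S (Seq f g) x' c = (let (y', c1') = dif S f x' (vfst c); (z', c2') = dif S g y' (vsnd c)
                           in (z', VP c1' c2'))"
| "dif S (Par f g) x' c = (let (y1', c1') = dif S f (vfst x') (vfst c); (y2', c2') = dif S g (vsnd x') (vsnd c)
                           in (VP y1' y2', VP c1' c2'))"
| "dif S Id x' c = (den S Id x', VUnit)"
| "dif S Dup x' c = (den S Dup x', VUnit)"
| "dif S Fst x' c = (den S Fst x', VUnit)"
| "dif S Snd x' c = (den S Snd x', VUnit)"
| "dif S (Cst k) x' c = (vminus S k k, VUnit)"
| "dif S Plus x' c = (vplus S (vfst x') (vsnd x'), VUnit)"
| "dif S (Op f C i d) x' c = d x' c"
| "dif S (Map s f) x' c = (restr S s (\<lambda>j. fst (dif S f (app x' j) (app c j))),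
                           restr S s (\<lambda>j. snd (dif S f (app x' j) (app c j))))"
| "dif S (Zip s) x' c = (den S (Zip s) x', VUnit)"
| "dif S (Get i) x' c = (den S (Get i) x', VUnit)"
| "dif S (SetE i) x' c = (den S (SetE i) x', VUnit)"
| "dif S (Reshape s r) x' c = (den S (Reshape s r) x', VUnit)"
| "dif S (Replicate s) x' c = (den S (Replicate s) x', VUnit)"
| "dif S (Tp s1 s2) x' c = (den S (Tp s1 s2) x', VUnit)"
| "dif S (Filter s p) x' c = (den S (Filter s p) x', VUnit)"
| "dif S Inl x' c = (VCl x', VUnit)"
| "dif S Inr x' c = (VCr x', VUnit)"
| "dif S Fuse x' c = (case x' of
      VCl a' \<Rightarrow> (case c of VInl x \<Rightarrow> (a', VInl (vplus S x a')) | VInr y \<Rightarrow> (vminus S y y, VInr y) | _ \<Rightarrow> undefined)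
    | VCr b' \<Rightarrow> (case c of VInl x \<Rightarrow> (vminus S x x, VInl x) | VInr y \<Rightarrow> (b', VInr (vplus S y b')) | _ \<Rightarrow> undefined)
    | VSl x \<Rightarrow> (case c of VInl x0 \<Rightarrow> (vminus S x x0, VInl x) | VInr x0 \<Rightarrow> (vminus S x x0, VInl x) | _ \<Rightarrow> undefined)
    | VSr y \<Rightarrow> (case c of VInl y0 \<Rightarrow> (vminus S y y0, VInr y) | VInr y0 \<Rightarrow> (vminus S y y0, VInr y) | _ \<Rightarrow> undefined)
    | VNull \<Rightarrow> (case c of VInl x \<Rightarrow> (vminus S x x, VInl x) | VInr x \<Rightarrow> (vminus S x x, VInr x) | _ \<Rightarrow> undefined)
    | _ \<Rightarrow> undefined)"
| "dif S Distr x' c = (let a' = vfst x'; a = vfst c; a1 = vplus S a a' in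
    (case vsnd x' of
      VCl y' \<Rightarrow> (case vsnd c of
          VInl y \<Rightarrow> (VCl (VP a' y'), VP a1 (VInl (vplus S y y')))
        | VInr y \<Rightarrow> (VCr (VP a' (vminus S y y)), VP a1 (VInr y)) | _ \<Rightarrow> undefined)
    | VCr y' \<Rightarrow> (case vsnd c of
          VInl y \<Rightarrow> (VCl (VP a' (vminus S y y)), VP a1 (VInl y))
        | VInr y \<Rightarrow> (VCr (VP a' y'), VP a1 (VInr (vplus S y y'))) | _ \<Rightarrow> undefined)
    | VSl y \<Rightarrow> (VSl (VP a1 y), VP a1 (VInl y))
    | VSr y \<Rightarrow> (VSr (VP a1 y), VP a1 (VInr y))
    | VNull \<Rightarrow> (case vsnd c of
          VInl y \<Rightarrow> (VCl (VP a' (vminus S y y)), VP a1 (VInl y))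
        | VInr y \<Rightarrow> (VCr (VP a' (vminus S y y)), VP a1 (VInr y)) | _ \<Rightarrow> undefined)
    | _ \<Rightarrow> undefined))"
| "dif S (Alt f g) x' z = (case x' of
      VCl a' \<Rightarrow> (case z of
          VInl cy \<Rightarrow> (let (y', c') = dif S f a' (vfst cy) in (VCl y', VInl (VP c' (vplus S (vsnd cy) y'))))
        | VInr _ \<Rightarrow> (VNull, z) | _ \<Rightarrow> undefined)
    | VCr a' \<Rightarrow> (case z of
          VInl _ \<Rightarrow> (VNull, z)
        | VInr cy \<Rightarrow> (let (y', c') = dif S g a' (vfst cy) in (VCr y', VInr (VP c' (vplus S (vsnd cy) y'))))
        | _ \<Rightarrow> undefined)
    | VSl a \<Rightarrow> (let (y, c) = ini S f a in (case z of
          VInl cy \<Rightarrow> (VCl (vminus S y (vsnd cy)), VInl (VP c y))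
        | VInr _ \<Rightarrow> (VSl y, VInl (VP c y)) | _ \<Rightarrow> undefined))
    | VSr a \<Rightarrow> (let (y, c) = ini S g a in (case z of
          VInl _ \<Rightarrow> (VSr y, VInr (VP c y))
        | VInr cy \<Rightarrow> (VCr (vminus S y (vsnd cy)), VInr (VP c y)) | _ \<Rightarrow> undefined))
    | VNull \<Rightarrow> (VNull, z)
    | _ \<Rightarrow> undefined)"

definition consistent :: "('b, 's, 'p) setting \<Rightarrow> 's ty \<Rightarrow> (('b, 'p) v \<Rightarrow> ('b, 'p) v)
    \<Rightarrow> (('b, 'p) v \<Rightarrow> ('b, 'p) v \<times> ('b, 'p) v) \<Rightarrow> (('b, 'p) v \<Rightarrow> ('b, 'p) v \<Rightarrow> ('b, 'p) v \<times> ('b, 'p) v) \<Rightarrow> bool" where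
  "consistent S A f i d \<longleftrightarrow> (\<forall>x\<in>vals S A. \<forall>x'\<in>dvals S A.
      fst (i x) = f x \<and>
      f (vplus S x x') = vplus S (f x) (fst (d x' (snd (i x)))) \<and>
      snd (i (vplus S x x')) = snd (d x' (snd (i x))))"

definition user_op :: "('b, 's, 'p) setting \<Rightarrow> 's ty \<Rightarrow> 's ty \<Rightarrow> (('b, 'p) v \<Rightarrow> ('b, 'p) v) \<Rightarrow> ('b, 'p) v set
    \<Rightarrow> (('b, 'p) v \<Rightarrow> ('b, 'p) v \<times> ('b, 'p) v) \<Rightarrow> (('b, 'p) v \<Rightarrow> ('b, 'p) v \<Rightarrow> ('b, 'p) v \<times> ('b, 'p) v) \<Rightarrow> bool" where
  "user_op S A B f C i d \<longleftrightarrow>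
     (\<forall>x\<in>vals S A. f x \<in> vals S B) \<and>
     (\<forall>x\<in>vals S A. fst (i x) \<in> vals S B \<and> snd (i x) \<in> C) \<and>
     (\<forall>x'\<in>dvals S A. \<forall>c\<in>C. fst (d x' c) \<in> dvals S B \<and> snd (d x' c) \<in> C) \<and>
     consistent S A f i d"

definition plus_ok :: "('b, 's, 'p) setting \<Rightarrow> 's ty \<Rightarrow> bool" where
  "plus_ok S A \<longleftrightarrow> vals S A = dvals S A \<and>
     (\<forall>x\<in>vals S A. \<forall>y\<in>vals S A. \<forall>z\<in>vals S A. vplus S (vplus S x y) z = vplus S x (vplus S y z)) \<and>
     (\<forall>x\<in>vals S A. \<forall>y\<in>vals S A. vplus S x y = vplus S y x)"

inductive wt :: "('b, 's, 'p) setting \<Rightarrow> ('b, 's, 'p) exp \<Rightarrow> 's ty \<Rightarrow> 's ty \<Rightarrow> bool" for S where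
  wt_Seq: "wt S e1 A B \<Longrightarrow> wt S e2 B C \<Longrightarrow> wt S (Seq e1 e2) A C"
| wt_Par: "wt S e1 A B \<Longrightarrow> wt S e2 C D \<Longrightarrow> wt S (Par e1 e2) (TProd A C) (TProd B D)"
| wt_Id: "wt S Id A A"
| wt_Dup: "wt S Dup A (TProd A A)"
| wt_Fst: "wt S Fst (TProd A B) A"
| wt_Snd: "wt S Snd (TProd A B) B"
| wt_Cst: "c \<in> vals S A \<Longrightarrow> wt S (Cst c) B A"
| wt_Plus: "plus_ok S A \<Longrightarrow> wt S Plus (TProd A A) A"
| wt_Op: "user_op S A B f C i d \<Longrightarrow> wt S (Op f C i d) A B"
| wt_Map: "wt S e A B \<Longrightarrow> wt S (Map s e) (TF s A) (TF s B)"
| wt_Zip: "wt S (Zip s) (TProd (TF s A) (TF s B)) (TF s (TProd A B))"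
| wt_Get: "i \<in> pos S s \<Longrightarrow> wt S (Get i) (TF s A) A"
| wt_Set: "i \<in> pos S s \<Longrightarrow> wt S (SetE i) (TProd A (TF s A)) (TF s A)"
| wt_Reshape: "r ` pos S s2 \<subseteq> pos S s1 \<Longrightarrow> wt S (Reshape s2 r) (TF s1 A) (TF s2 A)"
| wt_Replicate: "wt S (Replicate s) A (TF s A)"
| wt_Tp: "wt S (Tp s1 s2) (TF s1 (TF s2 A)) (TF s2 (TF s1 A))"
| wt_Filter: "wt S (Filter s p) (TProd A (TF s A)) (TF s A)"
| wt_Inl: "wt S Inl A (TSum A B)"
| wt_Inr: "wt S Inr B (TSum A B)"
| wt_Fuse: "wt S Fuse (TSum A A) A"
| wt_Distr: "wt S Distr (TProd A (TSum B C)) (TSum (TProd A B) (TProd A C))"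
| wt_Alt: "wt S e1 A B \<Longrightarrow> wt S e2 C D \<Longrightarrow> wt S (Alt e1 e2) (TSum A C) (TSum B D)"

end

theory Submission
  imports Defs
begin

locale base =
  fixes S :: "('b, 's, 'p) setting"
  assumes plus_closed: "\<forall>a\<in>beta S. \<forall>a'\<in>dbeta S. bplus S a a' \<in> beta S"
      and minus_closed: "\<forall>a\<in>beta S. \<forall>b\<in>beta S. bminus S a b \<in> dbeta S"
      and plus_minus: "\<forall>a\<in>beta S. \<forall>b\<in>beta S. bplus S a (bminus S b a) = b"
begin

lemma plus_vals: "x \<in> vals S A \<Longrightarrow> x' \<in> dvals S A \<Longrightarrow> vplus S x x' \<in> vals S A"
proof (induction A arbitrary: x x')
  case TB then show ?case using plus_closed by auto
next
  case (TF s A)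
  from TF.prems(1) obtain g where x: "x = VF g" "\<forall>i\<in>pos S s. g i \<in> vals S A" "\<forall>i. i \<notin> pos S s \<longrightarrow> g i = VUnit" by auto
  from TF.prems(2) obtain g' where x': "x' = VF g'" "\<forall>i\<in>pos S s. g' i \<in> dvals S A" "\<forall>i. i \<notin> pos S s \<longrightarrow> g' i = VUnit" by auto
  show ?case using x x' TF.IH by auto
next
  case (TProd A1 A2) then show ?case by auto
next
  case (TSum A1 A2) then show ?case by auto
qed

lemma minus_vals: "x \<in> vals S A \<Longrightarrow> y \<in> vals S A \<Longrightarrow> vminus S y x \<in> dvals S A \<and> vplus S x (vminus S y x) = y"
proof (induction A arbitrary: x y)
  case TB then show ?case using minus_closed plus_minus by auto
next
  case (TF s A)
  from TF.prems(1) obtain g where x: "x = VF g" "\<forall>i\<in>pos S s. g i \<in> vals S A" "\<forall>i. i \<notin> pos S s \<longrightarrow> g i = VUnit" by auto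
  from TF.prems(2) obtain g' where x': "y = VF g'" "\<forall>i\<in>pos S s. g' i \<in> vals S A" "\<forall>i. i \<notin> pos S s \<longrightarrow> g' i = VUnit" by auto
  have "vminus S y x \<in> dvals S (TF s A)" using x x' TF.IH by auto
  moreover have "vplus S x (vminus S y x) = y" using x x' TF.IH by (auto simp: fun_eq_iff) (metis vminus.simps(11) vplus.simps(11))
  ultimately show ?case by blast
next
  case (TProd A1 A2) then show ?case by auto
next
  case (TSum A1 A2) then show ?case by auto
qed


lemma restr_vals: "(\<And>j. j \<in> pos S s \<Longrightarrow> h j \<in> vals S A) \<Longrightarrow> restr S s h \<in> vals S (TF s A)"
  by (auto simp: restr_def intro!: exI[of _ "\<lambda>j. if j \<in> pos S s then h j else VUnit"])
lemma restr_dvals: "(\<And>j. j \<in> pos S s \<Longrightarrow> h j \<in> dvals S A) \<Longrightarrow> restr S s h \<in> dvals S (TF s A)"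
  by (auto simp: restr_def intro!: exI[of _ "\<lambda>j. if j \<in> pos S s then h j else VUnit"])

lemma vals_VF: "VF h \<in> vals S (TF s A) \<longleftrightarrow> (\<forall>i\<in>pos S s. h i \<in> vals S A) \<and> (\<forall>i. i \<notin> pos S s \<longrightarrow> h i = VUnit)"
  by auto
lemma dvals_VF: "VF h \<in> dvals S (TF s A) \<longleftrightarrow> (\<forall>i\<in>pos S s. h i \<in> dvals S A) \<and> (\<forall>i. i \<notin> pos S s \<longrightarrow> h i = VUnit)"
  by auto
lemma valsTF_E: "x \<in> vals S (TF s A) \<Longrightarrow> (\<And>g. x = VF g \<Longrightarrow> \<forall>i\<in>pos S s. g i \<in> vals S A \<Longrightarrow> \<forall>i. i \<notin> pos S s \<longrightarrow> g i = VUnit \<Longrightarrow> P) \<Longrightarrow> P"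
  by auto
lemma dvalsTF_E: "x \<in> dvals S (TF s A) \<Longrightarrow> (\<And>g. x = VF g \<Longrightarrow> \<forall>i\<in>pos S s. g i \<in> dvals S A \<Longrightarrow> \<forall>i. i \<notin> pos S s \<longrightarrow> g i = VUnit \<Longrightarrow> P) \<Longrightarrow> P"
  by auto

definition good where "good e A B \<longleftrightarrow> (\<forall>x\<in>vals S A. den S e x \<in> vals S B \<and> fst (ini S e x) = den S e x \<and>
   (\<forall>x'\<in>dvals S A. fst (dif S e x' (snd (ini S e x))) \<in> dvals S B \<and>
      den S e (vplus S x x') = vplus S (den S e x) (fst (dif S e x' (snd (ini S e x)))) \<and>
      snd (ini S e (vplus S x x')) = snd (dif S e x' (snd (ini S e x)))))"

lemma good_Seq:
  assumes h1: "good e1 A B" and h2: "good e2 B C" shows "good (Seq e1 e2) A C"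
  unfolding good_def
proof (intro ballI conjI)
  fix x assume x: "x \<in> vals S A"
  obtain y c1 where i1: "ini S e1 x = (y, c1)" by fastforce
  obtain z c2 where i2: "ini S e2 y = (z, c2)" by fastforce
  have y: "y = den S e1 x" "y \<in> vals S B" using h1 x i1 unfolding good_def by force+
  have z: "z = den S e2 y" "z \<in> vals S C" using h2 y i2 unfolding good_def by force+
  have iS: "ini S (Seq e1 e2) x = (z, VP c1 c2)" using i1 i2 by simp
  show "den S (Seq e1 e2) x \<in> vals S C" "fst (ini S (Seq e1 e2) x) = den S (Seq e1 e2) x"
    using y z iS by auto
  fix x' assume x': "x' \<in> dvals S A"
  obtain y' c1' where d1: "dif S e1 x' c1 = (y', c1')" by fastforce
  obtain z' c2' where d2: "dif S e2 y' c2 = (z', c2')" by fastforce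
  have dS: "dif S (Seq e1 e2) x' (snd (ini S (Seq e1 e2) x)) = (z', VP c1' c2')" using iS d1 d2 by simp
  have H1: "y' \<in> dvals S B" "den S e1 (vplus S x x') = vplus S y y'" "snd (ini S e1 (vplus S x x')) = c1'"
    using h1 x x' i1 d1 y unfolding good_def by force+
  have H2: "z' \<in> dvals S C" "den S e2 (vplus S y y') = vplus S z z'" "snd (ini S e2 (vplus S y y')) = c2'"
    using h2 y H1 i2 d2 z unfolding good_def by force+
  have fx: "fst (ini S e1 (vplus S x x')) = den S e1 (vplus S x x')"
    using h1 plus_vals[OF x x'] unfolding good_def by blast
  show "fst (dif S (Seq e1 e2) x' (snd (ini S (Seq e1 e2) x))) \<in> dvals S C"
    "den S (Seq e1 e2) (vplus S x x') = vplus S (den S (Seq e1 e2) x) (fst (dif S (Seq e1 e2) x' (snd (ini S (Seq e1 e2) x))))"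
    "snd (ini S (Seq e1 e2) (vplus S x x')) = snd (dif S (Seq e1 e2) x' (snd (ini S (Seq e1 e2) x)))"
    using dS H1 H2 y z fx by (auto simp: split_def Let_def)
qed


lemma good_Par:
  assumes h1: "good e1 A B" and h2: "good e2 C D" shows "good (Par e1 e2) (TProd A C) (TProd B D)"
  unfolding good_def
proof (intro ballI conjI)
  fix x assume x: "x \<in> vals S (TProd A C)"
  then obtain a b where ab: "x = VP a b" "a \<in> vals S A" "b \<in> vals S C" by auto
  obtain y1 c1 where i1: "ini S e1 a = (y1, c1)" by fastforce
  obtain y2 c2 where i2: "ini S e2 b = (y2, c2)" by fastforce
  have y1: "y1 = den S e1 a" "y1 \<in> vals S B" using h1 ab i1 unfolding good_def by force+
  have y2: "y2 = den S e2 b" "y2 \<in> vals S D" using h2 ab i2 unfolding good_def by force+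
  have iS: "ini S (Par e1 e2) x = (VP y1 y2, VP c1 c2)" using i1 i2 ab by simp
  show "den S (Par e1 e2) x \<in> vals S (TProd B D)" "fst (ini S (Par e1 e2) x) = den S (Par e1 e2) x"
    using y1 y2 iS ab by auto
  fix x' assume x': "x' \<in> dvals S (TProd A C)"
  then obtain a' b' where ab': "x' = VP a' b'" "a' \<in> dvals S A" "b' \<in> dvals S C" by auto
  obtain y1' c1' where d1: "dif S e1 a' c1 = (y1', c1')" by fastforce
  obtain y2' c2' where d2: "dif S e2 b' c2 = (y2', c2')" by fastforce
  have dS: "dif S (Par e1 e2) x' (snd (ini S (Par e1 e2) x)) = (VP y1' y2', VP c1' c2')" using iS d1 d2 ab' by simp
  have H1: "y1' \<in> dvals S B" "den S e1 (vplus S a a') = vplus S y1 y1'" "snd (ini S e1 (vplus S a a')) = c1'"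
    using h1 ab ab' i1 d1 y1 unfolding good_def by force+
  have H2: "y2' \<in> dvals S D" "den S e2 (vplus S b b') = vplus S y2 y2'" "snd (ini S e2 (vplus S b b')) = c2'"
    using h2 ab ab' i2 d2 y2 unfolding good_def by force+
  show "fst (dif S (Par e1 e2) x' (snd (ini S (Par e1 e2) x))) \<in> dvals S (TProd B D)"
    "den S (Par e1 e2) (vplus S x x') = vplus S (den S (Par e1 e2) x) (fst (dif S (Par e1 e2) x' (snd (ini S (Par e1 e2) x))))"
    "snd (ini S (Par e1 e2) (vplus S x x')) = snd (dif S (Par e1 e2) x' (snd (ini S (Par e1 e2) x)))"
    using dS H1 H2 y1 y2 ab ab' by (auto simp: split_def Let_def)
qed

lemma good_Map:
  assumes h: "good e A B" shows "good (Map s e) (TF s A) (TF s B)"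
  unfolding good_def
proof (intro ballI conjI)
  fix x assume x: "x \<in> vals S (TF s A)"
  then obtain g where g: "x = VF g" "\<forall>i\<in>pos S s. g i \<in> vals S A" "\<forall>i. i \<notin> pos S s \<longrightarrow> g i = VUnit" by auto
  have hg: "\<And>i. i \<in> pos S s \<Longrightarrow> den S e (g i) \<in> vals S B \<and> fst (ini S e (g i)) = den S e (g i)"
    using h g unfolding good_def by blast
  show "den S (Map s e) x \<in> vals S (TF s B)"
    using g hg by (auto simp: restr_def intro!: exI[of _ "\<lambda>j. if j \<in> pos S s then den S e (g j) else VUnit"])
  show "fst (ini S (Map s e) x) = den S (Map s e) x"
    using g hg by (auto simp: restr_def fun_eq_iff)
  fix x' assume x': "x' \<in> dvals S (TF s A)"
  then obtain g' where g': "x' = VF g'" "\<forall>i\<in>pos S s. g' i \<in> dvals S A" "\<forall>i. i \<notin> pos S s \<longrightarrow> g' i = VUnit" by auto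
  have hg': "\<And>i. i \<in> pos S s \<Longrightarrow> fst (dif S e (g' i) (snd (ini S e (g i)))) \<in> dvals S B \<and>
      den S e (vplus S (g i) (g' i)) = vplus S (den S e (g i)) (fst (dif S e (g' i) (snd (ini S e (g i))))) \<and>
      snd (ini S e (vplus S (g i) (g' i))) = snd (dif S e (g' i) (snd (ini S e (g i))))"
    using h g g' unfolding good_def by blast
  show "fst (dif S (Map s e) x' (snd (ini S (Map s e) x))) \<in> dvals S (TF s B)"
    using g g' hg' by (auto simp: restr_def intro!: restr_dvals)
  show "den S (Map s e) (vplus S x x') = vplus S (den S (Map s e) x) (fst (dif S (Map s e) x' (snd (ini S (Map s e) x))))"
    "snd (ini S (Map s e) (vplus S x x')) = snd (dif S (Map s e) x' (snd (ini S (Map s e) x)))"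
    using g g' hg' by (auto simp: restr_def fun_eq_iff)
qed

lemma good_Id: "good Id A A" unfolding good_def by auto
lemma good_Dup: "good Dup A (TProd A A)" unfolding good_def by auto
lemma good_Fst: "good Fst (TProd A B) A" unfolding good_def by auto
lemma good_Snd: "good Snd (TProd A B) B" unfolding good_def by auto
lemma good_Cst: "c \<in> vals S A \<Longrightarrow> good (Cst c) B A" unfolding good_def using minus_vals by auto
lemma good_Inl: "good Inl A (TSum A B)" unfolding good_def by auto
lemma good_Inr: "good Inr B (TSum A B)" unfolding good_def by auto
lemma good_Op: "user_op S A B f C i d \<Longrightarrow> good (Op f C i d) A B"
proof -
  assume u: "user_op S A B f C i d"
  show ?thesis unfolding good_def
  proof (intro ballI conjI)
    fix x assume x: "x \<in> vals S A"
    have w: "vminus S x x \<in> dvals S A" using minus_vals[OF x x] by blast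
    show "den S (Op f C i d) x \<in> vals S B" using u x unfolding user_op_def by simp
    show "fst (ini S (Op f C i d) x) = den S (Op f C i d) x" using u x w unfolding user_op_def consistent_def by simp
    fix x' assume x': "x' \<in> dvals S A"
    show "fst (dif S (Op f C i d) x' (snd (ini S (Op f C i d) x))) \<in> dvals S B"
      using u x x' unfolding user_op_def by simp
    show "den S (Op f C i d) (vplus S x x') = vplus S (den S (Op f C i d) x) (fst (dif S (Op f C i d) x' (snd (ini S (Op f C i d) x))))"
      "snd (ini S (Op f C i d) (vplus S x x')) = snd (dif S (Op f C i d) x' (snd (ini S (Op f C i d) x)))"
      using u x x' unfolding user_op_def consistent_def by simp_all
  qed
qed


lemma good_Plus: assumes p: "plus_ok S A" shows "good Plus (TProd A A) A"
proof -
  have eq: "vals S A = dvals S A" and as: "\<And>x y z. x\<in>vals S A \<Longrightarrow> y\<in>vals S A \<Longrightarrow> z\<in>vals S A \<Longrightarrow> vplus S (vplus S x y) z = vplus S x (vplus S y z)"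
    and cm: "\<And>x y. x\<in>vals S A \<Longrightarrow> y\<in>vals S A \<Longrightarrow> vplus S x y = vplus S y x"
    using p unfolding plus_ok_def by auto
  have cl: "\<And>x y. x\<in>vals S A \<Longrightarrow> y\<in>vals S A \<Longrightarrow> vplus S x y \<in> vals S A" using plus_vals eq by blast
  have sw: "vplus S (vplus S a a') (vplus S b b') = vplus S (vplus S a b) (vplus S a' b')"
    if "a \<in> vals S A" "a' \<in> vals S A" "b \<in> vals S A" "b' \<in> vals S A" for a a' b b'
  proof -
    have "vplus S (vplus S a a') (vplus S b b') = vplus S a (vplus S a' (vplus S b b'))" using that as cl by simp
    also have "vplus S a' (vplus S b b') = vplus S (vplus S a' b) b'" using that as cl by simp
    also have "vplus S a' b = vplus S b a'" using that cm by simp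
    also have "vplus S (vplus S b a') b' = vplus S b (vplus S a' b')" using that as cl by simp
    also have "vplus S a (vplus S b (vplus S a' b')) = vplus S (vplus S a b) (vplus S a' b')" using that as cl by simp
    finally show ?thesis .
  qed
  show ?thesis unfolding good_def using cl sw eq by auto
qed

lemma app_plus: "x \<in> vals S (TF s A) \<Longrightarrow> x' \<in> dvals S (TF s A) \<Longrightarrow> app (vplus S x x') i = vplus S (app x i) (app x' i)"
  by auto

lemmas X = restr_def fun_eq_iff Let_def vals_VF dvals_VF
lemmas E = valsTF_E dvalsTF_E

lemma good_Zip: "good (Zip s) (TProd (TF s A) (TF s B)) (TF s (TProd A B))"
  unfolding good_def by (auto simp: X simp del: vals.simps(2) dvals.simps(2) elim!: E)

lemma good_Get: "i \<in> pos S s \<Longrightarrow> good (Get i) (TF s A) A"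
  unfolding good_def by auto

lemma good_Set: "i \<in> pos S s \<Longrightarrow> good (SetE i) (TProd A (TF s A)) (TF s A)"
  unfolding good_def by (auto simp: X simp del: vals.simps(2) dvals.simps(2) elim!: E)

lemma good_Reshape: "r ` pos S s2 \<subseteq> pos S s1 \<Longrightarrow> good (Reshape s2 r) (TF s1 A) (TF s2 A)"
  unfolding good_def by (auto simp: X simp del: vals.simps(2) dvals.simps(2) elim!: E)

lemma good_Replicate: "good (Replicate s) A (TF s A)"
  unfolding good_def by (auto simp: X simp del: vals.simps(2) dvals.simps(2) elim!: E)

lemma good_Tp: "good (Tp s1 s2) (TF s1 (TF s2 A)) (TF s2 (TF s1 A))"
  unfolding good_def by (auto simp: X app_plus simp del: vals.simps(2) dvals.simps(2) elim!: E) (metis app_plus)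

lemma good_Filter: "good (Filter s p) (TProd A (TF s A)) (TF s A)"
  unfolding good_def by (auto simp: X simp del: vals.simps(2) dvals.simps(2) elim!: E)

lemma good_Fuse: "good Fuse (TSum A A) A"
  unfolding good_def using minus_vals plus_vals by auto

lemma good_Distr: "good Distr (TProd A (TSum B C)) (TSum (TProd A B) (TProd A C))"
  unfolding good_def using minus_vals plus_vals by (auto simp: Let_def)


lemma good_Alt:
  assumes h1: "good f A B" and h2: "good g C D" shows "good (Alt f g) (TSum A C) (TSum B D)"
proof -
  have F: "\<And>a. a \<in> vals S A \<Longrightarrow> den S f a \<in> vals S B \<and> fst (ini S f a) = den S f a"
    using h1 unfolding good_def by blast
  have F': "\<And>a a'. a \<in> vals S A \<Longrightarrow> a' \<in> dvals S A \<Longrightarrow> fst (dif S f a' (snd (ini S f a))) \<in> dvals S B \<and>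
      den S f (vplus S a a') = vplus S (den S f a) (fst (dif S f a' (snd (ini S f a)))) \<and>
      snd (ini S f (vplus S a a')) = snd (dif S f a' (snd (ini S f a)))"
    using h1 unfolding good_def by blast
  have G: "\<And>a. a \<in> vals S C \<Longrightarrow> den S g a \<in> vals S D \<and> fst (ini S g a) = den S g a"
    using h2 unfolding good_def by blast
  have G': "\<And>a a'. a \<in> vals S C \<Longrightarrow> a' \<in> dvals S C \<Longrightarrow> fst (dif S g a' (snd (ini S g a))) \<in> dvals S D \<and>
      den S g (vplus S a a') = vplus S (den S g a) (fst (dif S g a' (snd (ini S g a)))) \<and>
      snd (ini S g (vplus S a a')) = snd (dif S g a' (snd (ini S g a)))"
    using h2 unfolding good_def by blast
  show ?thesis unfolding good_def
  proof (intro ballI)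
    fix x assume x: "x \<in> vals S (TSum A C)"
    then consider (L) a where "x = VInl a" "a \<in> vals S A" | (R) a where "x = VInr a" "a \<in> vals S C" by auto
    then show "den S (Alt f g) x \<in> vals S (TSum B D) \<and> fst (ini S (Alt f g) x) = den S (Alt f g) x \<and>
      (\<forall>x'\<in>dvals S (TSum A C). fst (dif S (Alt f g) x' (snd (ini S (Alt f g) x))) \<in> dvals S (TSum B D) \<and>
         den S (Alt f g) (vplus S x x') = vplus S (den S (Alt f g) x) (fst (dif S (Alt f g) x' (snd (ini S (Alt f g) x)))) \<and>
         snd (ini S (Alt f g) (vplus S x x')) = snd (dif S (Alt f g) x' (snd (ini S (Alt f g) x))))"
    proof cases
      case L
      note Fa = F[OF L(2)]
      show ?thesis
      proof (intro conjI ballI)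
        show "den S (Alt f g) x \<in> vals S (TSum B D)" "fst (ini S (Alt f g) x) = den S (Alt f g) x"
          using L Fa by (auto simp: split_def Let_def)
        fix x' assume x': "x' \<in> dvals S (TSum A C)"
        then consider (Cl) a' where "x' = VCl a'" "a' \<in> dvals S A" | (Cr) a' where "x' = VCr a'" "a' \<in> dvals S C"
          | (Sl) a2 where "x' = VSl a2" "a2 \<in> vals S A" | (Sr) a2 where "x' = VSr a2" "a2 \<in> vals S C"
          | (Nu) "x' = VNull" by auto
        then have "fst (dif S (Alt f g) x' (snd (ini S (Alt f g) x))) \<in> dvals S (TSum B D) \<and>
         den S (Alt f g) (vplus S x x') = vplus S (den S (Alt f g) x) (fst (dif S (Alt f g) x' (snd (ini S (Alt f g) x)))) \<and>
         snd (ini S (Alt f g) (vplus S x x')) = snd (dif S (Alt f g) x' (snd (ini S (Alt f g) x)))"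
        proof cases
          case Cl
          note Fa' = F'[OF L(2) Cl(2)] F[OF plus_vals[OF L(2) Cl(2)]]
          show ?thesis using L Cl Fa Fa' by (auto simp: split_def Let_def)
        next
          case Cr
          show ?thesis using L Cr Fa by (auto simp: split_def Let_def)
        next
          case Sl
          note Fa2 = F[OF Sl(2)]
          show ?thesis using L Sl Fa Fa2 minus_vals[of "den S f a" B "den S f a2"] by (auto simp: split_def Let_def)
        next
          case Sr
          note Ga2 = G[OF Sr(2)]
          show ?thesis using L Sr Fa Ga2 by (auto simp: split_def Let_def)
        next
          case Nu
          show ?thesis using L Nu Fa by (auto simp: split_def Let_def)
        qed
        then show "fst (dif S (Alt f g) x' (snd (ini S (Alt f g) x))) \<in> dvals S (TSum B D)"
         "den S (Alt f g) (vplus S x x') = vplus S (den S (Alt f g) x) (fst (dif S (Alt f g) x' (snd (ini S (Alt f g) x))))"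
         "snd (ini S (Alt f g) (vplus S x x')) = snd (dif S (Alt f g) x' (snd (ini S (Alt f g) x)))" by auto
      qed
    next
      case R
      note Fa = G[OF R(2)]
      show ?thesis
      proof (intro conjI ballI)
        show "den S (Alt f g) x \<in> vals S (TSum B D)" "fst (ini S (Alt f g) x) = den S (Alt f g) x"
          using R Fa by (auto simp: split_def Let_def)
        fix x' assume x': "x' \<in> dvals S (TSum A C)"
        then consider (Cl) a' where "x' = VCl a'" "a' \<in> dvals S A" | (Cr) a' where "x' = VCr a'" "a' \<in> dvals S C"
          | (Sl) a2 where "x' = VSl a2" "a2 \<in> vals S A" | (Sr) a2 where "x' = VSr a2" "a2 \<in> vals S C"
          | (Nu) "x' = VNull" by auto
        then have "fst (dif S (Alt f g) x' (snd (ini S (Alt f g) x))) \<in> dvals S (TSum B D) \<and>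
         den S (Alt f g) (vplus S x x') = vplus S (den S (Alt f g) x) (fst (dif S (Alt f g) x' (snd (ini S (Alt f g) x)))) \<and>
         snd (ini S (Alt f g) (vplus S x x')) = snd (dif S (Alt f g) x' (snd (ini S (Alt f g) x)))"
        proof cases
          case Cr
          note Fa' = G'[OF R(2) Cr(2)] G[OF plus_vals[OF R(2) Cr(2)]]
          show ?thesis using R Cr Fa Fa' by (auto simp: split_def Let_def)
        next
          case Cl
          show ?thesis using R Cl Fa by (auto simp: split_def Let_def)
        next
          case Sr
          note Fa2 = G[OF Sr(2)]
          show ?thesis using R Sr Fa Fa2 minus_vals[of "den S g a" D "den S g a2"] by (auto simp: split_def Let_def)
        next
          case Sl
          note Ga2 = F[OF Sl(2)]
          show ?thesis using R Sl Fa Ga2 by (auto simp: split_def Let_def)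
        next
          case Nu
          show ?thesis using R Nu Fa by (auto simp: split_def Let_def)
        qed
        then show "fst (dif S (Alt f g) x' (snd (ini S (Alt f g) x))) \<in> dvals S (TSum B D)"
         "den S (Alt f g) (vplus S x x') = vplus S (den S (Alt f g) x) (fst (dif S (Alt f g) x' (snd (ini S (Alt f g) x))))"
         "snd (ini S (Alt f g) (vplus S x x')) = snd (dif S (Alt f g) x' (snd (ini S (Alt f g) x)))" by auto
      qed
    qed
  qed
qed

lemma wt_good: "wt S e A B \<Longrightarrow> good e A B"
proof (induction rule: wt.induct)
qed (auto intro: good_Seq good_Par good_Id good_Dup good_Fst good_Snd good_Cst good_Plus good_Op good_Map
  good_Zip good_Get good_Set good_Reshape good_Replicate good_Tp good_Filter good_Inl good_Inr good_Fuse good_Distr good_Alt)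

end

theorem lemma5p5:
  fixes S :: "('b, 's, 'p) setting" and e :: "('b, 's, 'p) exp" and A B :: "'s ty"
  assumes plus_closed: "\<forall>a\<in>beta S. \<forall>a'\<in>dbeta S. bplus S a a' \<in> beta S"
      and minus_closed: "\<forall>a\<in>beta S. \<forall>b\<in>beta S. bminus S a b \<in> dbeta S"
      and plus_minus: "\<forall>a\<in>beta S. \<forall>b\<in>beta S. bplus S a (bminus S b a) = b"
      and typed: "wt S e A B"
  shows "\<forall>x\<in>vals S A. \<forall>x'\<in>dvals S A.
           fst (ini S e x) = den S e x \<and>
           den S e (vplus S x x') = vplus S (den S e x) (fst (dif S e x' (snd (ini S e x)))) \<and>
           snd (ini S e (vplus S x x')) = snd (dif S e x' (snd (ini S e x)))"
proof -
  interpret base S using plus_closed minus_closed plus_minus by unfold_locales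
  show ?thesis using wt_good[OF typed] unfolding good_def by blast
qed

end
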